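(* Let $n^*_1,n^*_2\ge 1$ be integers, $n^*=n^*_1+n^*_2$. Let $X_1,\dots,X_{n^*}$ be dependent nonnegative random variables sharing an Archimedean copula with generator $\psi_1$ (with $\phi_1=\psi_1^{-1}$), where $X_i$ has distribution function $x\mapsto F_1(\lambda_1x)$ for $i=1,\dots,n^*_1$ and $X_j$ has distribution function $x\mapsto F_2(\lambda_2x)$ for $j=n^*_1+1,\dots,n^*$, with $\lambda_1,\lambda_2>0$. Let $Y_1,\dots,Y_{n^*}$ be dependent nonnegative random variables sharing an Archimedean copula with generator $\psi_2$ (with $\phi_2=\psi_2^{-1}$), where $Y_i$ has distribution function $x\mapsto F_1(\mu_1x)$ for $i=1,\dots,n^*_1$ and $Y_j$ has distribution function $x\mapsto F_2(\mu_2x)$ for $j=n^*_1+1,\dots,n^*$, with $\mu_1,\mu_2>0$. Let $X_{n^*:n^*}(n^*_1,n^*_2)=\max_i X_i$ and $Y_{n^*:n^*}(n^*_1,n^*_2)=\max_i Y_i$. Suppose $\phi_2\circ\psi_1$ is super-additive, $\psi_1$ or $\psi_2$ is log-convex, and $\tilde r_1$ or $\tilde r_2$ is decreasing. Suppose further that either (a) $\tilde r_1(x)\ge \tilde r_2(x)$ for all $x>0$, $n^*_1\ge n^*_2$, and $\boldsymbol\lambda=(\lambda_1,\lambda_2),\boldsymbol\mu=(\mu_1,\mu_2)\in\mathcal E_+$; or (b) $\tilde r_1(x)\le \tilde r_2(x)$ for all $x>0$, $n^*_1\le n^*_2$, and $\boldsymbol\lambda,\boldsymbol\mu\in\mathcal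 D_+$. Then $$(\underbrace{\lambda_1,\dots,\lambda_1}_{n^*_1},\underbrace{\lambda_2,\dots,\lambda_2}_{n^*_2})\succeq^{w}(\underbrace{\mu_1,\dots,\mu_1}_{n^*_1},\underbrace{\mu_2,\dots,\mu_2}_{n^*_2})\ \Longrightarrow\ Y_{n^*:n^*}(n^*_1,n^*_2)\le_{st}X_{n^*:n^*}(n^*_1,n^*_2).$$
   Context: Archimedean copula: a generator is a continuous nonincreasing $\psi:[0,\infty)\to[0,1]$ with $\psi(0)=1$, $\psi(\infty)=0$, which is $n$-monotone so that it generates an $n$-dimensional copula; $\phi=\psi^{-1}$ is its (right-continuous) inverse. Random variables $Z_1,\dots,Z_m$ with marginal distribution functions $G_1,\dots,G_m$ share an Archimedean copula with generator $\psi$ if $P(Z_1\le z_1,\dots,Z_m\le z_m)=\psi\big(\sum_{i=1}^m\phi(G_i(z_i))\big)$. $F_1,F_2$ are absolutely continuous baseline distribution functions of nonnegative random variables with densities $f_1,f_2$; $\tilde r_k=f_k/F_k$ is the reversed hazard rate of $F_k$. A function $g$ is super-additive if $g(x)+g(y)\le g(x+y)$ for all $x,y$ in its domain. $\mathcal E_+=\{(x_1,x_2):0<x_1\le x_2\}$, $\mathcal D_+=\{(x_1,x_2):x_1\ge x_2>0\}$. For vectors $\boldsymbol a,\boldsymbol b\in\mathbb R^k$ with increasingly ordered coordinates $a_{(1)}\le\dots\le a_{(k)}$, $b_{(1)}\le\dots\le b_{(k)}$: $\boldsymbol a\succeq^{w}\boldsymbol b$ means $\sum_{i=1}^l b_{(i)}\ge\sum_{i=1}^l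 a_{(i)}$ for all $l=1,\dots,k$. $U\le_{st}V$ means $P(U>x)\le P(V>x)$ for all $x$. "Increasing/decreasing" mean nondecreasing/nonincreasing. *)

theory Defs
  imports "HOL-Probability.Probability"
begin

(* n-monotonicity of a function on (0,oo) (McNeil & Neslehova 2009), n >= 2 *)
definition n_monotone :: "nat \<Rightarrow> (real \<Rightarrow> real) \<Rightarrow> bool" where
  "n_monotone n \<psi> \<longleftrightarrow>
     (\<forall>k < n - 2. \<forall>x > 0. ((deriv ^^ k) \<psi>) differentiable (at x)) \<and>
     (\<forall>k \<le> n - 2. \<forall>x > 0. (-1) ^ k * (deriv ^^ k) \<psi> x \<ge> 0) \<and>
     antimono_on {0<..} (\<lambda>x. (-1) ^ (n - 2) * (deriv ^^ (n - 2)) \<psi> x) \<and>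
     convex_on {0<..} (\<lambda>x. (-1) ^ (n - 2) * (deriv ^^ (n - 2)) \<psi> x)"

(* Archimedean generator of an n-dimensional copula (only values on [0,oo) matter) *)
definition arch_generator :: "nat \<Rightarrow> (real \<Rightarrow> real) \<Rightarrow> bool" where
  "arch_generator n \<psi> \<longleftrightarrow>
     continuous_on {0..} \<psi> \<and> antimono_on {0..} \<psi> \<and>
     (\<forall>x \<ge> 0. 0 \<le> \<psi> x \<and> \<psi> x \<le> 1) \<and>
     \<psi> 0 = 1 \<and> (\<psi> \<longlongrightarrow> 0) at_top \<and> n_monotone n \<psi>"

(* generalized inverse phi = psi^{-1}: [0,1] -> [0,oo], phi(u) = inf {x >= 0. psi x <= u},
   with inf {} = oo (so phi 0 = oo for strict generators) *)
definition gen_inv :: "(real \<Rightarrow> real) \<Rightarrow> real \<Rightarrow> ereal" where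
  "gen_inv \<psi> u = Inf (ereal ` {x. 0 \<le> x \<and> \<psi> x \<le> u})"

definition psi_ext :: "(real \<Rightarrow> real) \<Rightarrow> ereal \<Rightarrow> real" where
  "psi_ext \<psi> t = (if t = \<infinity> then 0 else \<psi> (real_of_ereal t))"

definition arch_copula :: "(real \<Rightarrow> real) \<Rightarrow> nat \<Rightarrow> (nat \<Rightarrow> real) \<Rightarrow> real" where
  "arch_copula \<psi> n u = psi_ext \<psi> (\<Sum>i<n. gen_inv \<psi> (u i))"

definition super_additive_on :: "real set \<Rightarrow> (real \<Rightarrow> ereal) \<Rightarrow> bool" where
  "super_additive_on S g \<longleftrightarrow>
     (\<forall>x\<in>S. \<forall>y\<in>S. x + y \<in> S \<longrightarrow> g x + g y \<le> g (x + y))"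

definition log_convex_on :: "real set \<Rightarrow> (real \<Rightarrow> real) \<Rightarrow> bool" where
  "log_convex_on S f \<longleftrightarrow> (\<forall>x\<in>S. f x > 0) \<and> convex_on S (\<lambda>x. ln (f x))"

definition abs_cont_cdf_nonneg :: "(real \<Rightarrow> real) \<Rightarrow> (real \<Rightarrow> real) \<Rightarrow> bool" where
  "abs_cont_cdf_nonneg F f \<longleftrightarrow>
     mono F \<and> (F \<longlongrightarrow> 0) at_bot \<and> (F \<longlongrightarrow> 1) at_top \<and>
     (\<forall>x < 0. F x = 0) \<and>
     (\<forall>x. 0 \<le> f x) \<and> (\<forall>x. (f has_integral F x) {..x})"

definition rev_hazard :: "(real \<Rightarrow> real) \<Rightarrow> (real \<Rightarrow> real) \<Rightarrow> real \<Rightarrow> real" where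
  "rev_hazard F f x = f x / F x"

(* a \<succeq>^w b : partial sums of increasingly ordered b dominate those of a *)
definition wmaj_ge :: "real list \<Rightarrow> real list \<Rightarrow> bool" where
  "wmaj_ge a b \<longleftrightarrow> length a = length b \<and>
     (\<forall>l \<in> {1..length a}. sum_list (take l (sort a)) \<le> sum_list (take l (sort b)))"

end

theory Submission
  imports Defs
begin

definition gb :: "(real \<Rightarrow> real) \<Rightarrow> bool" where
  "gb \<psi> \<longleftrightarrow> continuous_on {0..} \<psi> \<and> antimono_on {0..} \<psi> \<and>
     (\<forall>x \<ge> 0. 0 \<le> \<psi> x \<and> \<psi> x \<le> 1) \<and> \<psi> 0 = 1 \<and> (\<psi> \<longlongrightarrow> 0) at_top"

lemma gb_of_arch: "arch_generator n \<psi> \<Longrightarrow> gb \<psi>"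
  unfolding arch_generator_def gb_def by blast

lemma gen_inv_nonneg: "0 \<le> gen_inv \<psi> u"
  unfolding gen_inv_def by (auto intro!: Inf_greatest)

lemma gen_inv_antimono: "u \<le> v \<Longrightarrow> gen_inv \<psi> v \<le> gen_inv \<psi> u"
  unfolding gen_inv_def by (rule Inf_superset_mono) auto

lemma gen_inv_attained:
  assumes g: "gb \<psi>" and ne: "x0 \<ge> 0" "\<psi> x0 \<le> u"
  shows "\<exists>t\<ge>0. gen_inv \<psi> u = ereal t \<and> \<psi> t \<le> u \<and> (\<forall>x\<ge>0. \<psi> x \<le> u \<longrightarrow> t \<le> x)"
proof -
  define S where "S = {x. 0 \<le> x \<and> \<psi> x \<le> u}"
  have cont: "continuous_on {0..} \<psi>" using g by (simp add: gb_def)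
  have "closed ({0..} \<inter> \<psi> -` {..u})"
    by (rule continuous_closed_preimage[OF cont]) auto
  moreover have "{0..} \<inter> \<psi> -` {..u} = S" unfolding S_def by auto
  ultimately have cl: "closed S" by simp
  have ne': "S \<noteq> {}" using ne unfolding S_def by auto
  have bdd: "bdd_below S" unfolding S_def by (auto intro: bdd_belowI[of _ 0])
  define t where "t = Inf S"
  have tS: "t \<in> S" unfolding t_def using closed_contains_Inf[OF ne' bdd cl] .
  have tle: "\<And>x. x \<in> S \<Longrightarrow> t \<le> x" unfolding t_def using bdd by (simp add: cInf_lower)
  have "gen_inv \<psi> u = ereal t"
    unfolding gen_inv_def S_def[symmetric]
    by (rule cInf_eq_minimum) (use tS tle in auto)
  then show ?thesis using tS tle unfolding S_def by auto
qed

lemma gen_inv_exact: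
  assumes g: "gb \<psi>" and u: "0 \<le> u" "u \<le> 1" and t: "t \<ge> 0" "\<psi> t \<le> u"
    and min: "\<forall>x\<ge>0. \<psi> x \<le> u \<longrightarrow> t \<le> x"
  shows "\<psi> t = u"
proof (rule ccontr)
  assume ne: "\<psi> t \<noteq> u"
  then have lt: "\<psi> t < u" using t by simp
  have p0: "\<psi> 0 = 1" using g by (simp add: gb_def)
  have cont: "continuous_on {0..t} \<psi>" using g unfolding gb_def
    by (auto intro: continuous_on_subset)
  obtain x where x: "0 \<le> x" "x \<le> t" "\<psi> x = u"
    using IVT2'[of \<psi> t u 0, OF _ _ _ cont] lt p0 u t by auto
  then have "t \<le> x" using min by auto
  then have "x = t" using x by simp
  then show False using x lt by simp
qed

lemma psi_gen_inv:
  assumes g: "gb \<psi>" and u: "0 \<le> u" "u \<le> 1"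
  shows "psi_ext \<psi> (gen_inv \<psi> u) = u"
proof (cases "\<exists>x\<ge>0. \<psi> x \<le> u")
  case True
  then obtain x0 where "x0 \<ge> 0" "\<psi> x0 \<le> u" by auto
  from gen_inv_attained[OF g this] obtain t where t: "t \<ge> 0" "gen_inv \<psi> u = ereal t"
    "\<psi> t \<le> u" "\<forall>x\<ge>0. \<psi> x \<le> u \<longrightarrow> t \<le> x" by auto
  have "\<psi> t = u" by (rule gen_inv_exact[OF g u t(1) t(3) t(4)])
  then show ?thesis using t by (simp add: psi_ext_def)
next
  case False
  then have e: "{x. 0 \<le> x \<and> \<psi> x \<le> u} = {}" by auto
  have gi: "gen_inv \<psi> u = \<infinity>" unfolding gen_inv_def e by (simp add: top_ereal_def)
  have "u = 0"
  proof (rule ccontr)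
    assume "u \<noteq> 0" then have "u > 0" using u by simp
    have "(\<psi> \<longlongrightarrow> 0) at_top" using g by (simp add: gb_def)
    then have "eventually (\<lambda>x. \<psi> x < u) at_top"
      using \<open>u > 0\<close> by (simp add: order_tendstoD(2))
    then obtain N where "\<And>x. x \<ge> N \<Longrightarrow> \<psi> x < u" by (auto simp: eventually_at_top_linorder)
    then have "\<psi> (max N 0) < u" by simp
    then show False using False by (metis less_eq_real_def max.cobounded2)
  qed
  then show ?thesis using gi by (simp add: psi_ext_def)
qed

lemma psi_ext_nonneg:
  assumes g: "gb \<psi>" and s: "0 \<le> s"
  shows "0 \<le> psi_ext \<psi> s"
  using g s unfolding psi_ext_def gb_def
  by (cases s) auto

lemma psi_ext_antimono:
  assumes g: "gb \<psi>" and s: "0 \<le> s" "s \<le> t"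
  shows "psi_ext \<psi> t \<le> psi_ext \<psi> s"
proof (cases "t = \<infinity>")
  case True then show ?thesis using psi_ext_nonneg[OF g s(1)] by (simp add: psi_ext_def)
next
  case False
  then obtain a b where ab: "s = ereal a" "t = ereal b" using s
    by (cases s; cases t) auto
  then have "0 \<le> a" "a \<le> b" using s by auto
  moreover have "antimono_on {0..} \<psi>" using g by (simp add: gb_def)
  ultimately have "\<psi> b \<le> \<psi> a" by (auto simp: monotone_on_def)
  then show ?thesis using ab by (simp add: psi_ext_def)
qed

lemma copula_nonneg: "gb \<psi> \<Longrightarrow> 0 \<le> arch_copula \<psi> n u"
  unfolding arch_copula_def
  by (rule psi_ext_nonneg) (auto intro: sum_nonneg gen_inv_nonneg)

lemma superadd_sum:
  fixes h :: "real \<Rightarrow> ereal"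
  assumes sa: "super_additive_on {0..} h" and h0: "0 \<le> h 0"
  shows "finite I \<Longrightarrow> (\<forall>i\<in>I. 0 \<le> t i) \<Longrightarrow> (\<Sum>i\<in>I. h (t i)) \<le> h (\<Sum>i\<in>I. t i)"
proof (induction I rule: finite_induct)
  case empty then show ?case using h0 by simp
next
  case (insert j I)
  have "(\<Sum>i\<in>insert j I. h (t i)) = h (t j) + (\<Sum>i\<in>I. h (t i))" using insert by simp
  also have "\<dots> \<le> h (t j) + h (\<Sum>i\<in>I. t i)" using insert by (intro add_left_mono) auto
  also have "\<dots> \<le> h (t j + (\<Sum>i\<in>I. t i))"
    using sa insert.prems unfolding super_additive_on_def
    by (auto intro!: sum_nonneg)
  also have "t j + (\<Sum>i\<in>I. t i) = (\<Sum>i\<in>insert j I. t i)" using insert by simp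
  finally show ?case .
qed

lemma step1:
  assumes g1: "gb \<psi>1" and g2: "gb \<psi>2"
    and sa: "super_additive_on {0..} (\<lambda>x. gen_inv \<psi>2 (\<psi>1 x))"
    and u: "\<And>i. i < n \<Longrightarrow> 0 \<le> u i \<and> u i \<le> 1"
  shows "arch_copula \<psi>1 n u \<le> arch_copula \<psi>2 n u"
proof (cases "(\<Sum>i<n. gen_inv \<psi>1 (u i)) = \<infinity>")
  case True
  then show ?thesis using copula_nonneg[OF g2] by (simp add: arch_copula_def psi_ext_def)
next
  case False
  then have fin: "\<And>i. i < n \<Longrightarrow> gen_inv \<psi>1 (u i) \<noteq> \<infinity>" by (auto simp: sum_Pinfty)
  define t where "t i = real_of_ereal (gen_inv \<psi>1 (u i))" for i
  have te: "\<And>i. i < n \<Longrightarrow> gen_inv \<psi>1 (u i) = ereal (t i)"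
  proof -
    fix i assume i: "i < n"
    have "0 \<le> gen_inv \<psi>1 (u i)" by (rule gen_inv_nonneg)
    then have "\<bar>gen_inv \<psi>1 (u i)\<bar> \<noteq> \<infinity>" using fin[OF i] by auto
    then show "gen_inv \<psi>1 (u i) = ereal (t i)" unfolding t_def by (simp add: ereal_real')
  qed
  have t0: "\<And>i. i < n \<Longrightarrow> 0 \<le> t i" using te gen_inv_nonneg by (metis ereal_less_eq(5) zero_ereal_def)
  have pt: "\<And>i. i < n \<Longrightarrow> \<psi>1 (t i) = u i"
  proof -
    fix i assume i: "i < n"
    have "psi_ext \<psi>1 (gen_inv \<psi>1 (u i)) = u i" using psi_gen_inv[OF g1] u[OF i] by auto
    then show "\<psi>1 (t i) = u i" using te[OF i] by (simp add: psi_ext_def)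
  qed
  define T where "T = (\<Sum>i<n. t i)"
  have T0: "0 \<le> T" unfolding T_def using t0 by (auto intro: sum_nonneg)
  have S1: "(\<Sum>i<n. gen_inv \<psi>1 (u i)) = ereal T" unfolding T_def using te by simp
  have L: "arch_copula \<psi>1 n u = \<psi>1 T" unfolding arch_copula_def S1 psi_ext_def by simp
  have "(\<Sum>i<n. gen_inv \<psi>2 (u i)) = (\<Sum>i<n. gen_inv \<psi>2 (\<psi>1 (t i)))" using pt by simp
  also have "\<dots> \<le> gen_inv \<psi>2 (\<psi>1 T)" unfolding T_def
    by (rule superadd_sum[OF sa gen_inv_nonneg]) (use t0 in auto)
  finally have le: "(\<Sum>i<n. gen_inv \<psi>2 (u i)) \<le> gen_inv \<psi>2 (\<psi>1 T)" .
  have p1T: "0 \<le> \<psi>1 T" "\<psi>1 T \<le> 1" using g1 T0 by (auto simp: gb_def)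
  have "\<psi>1 T = psi_ext \<psi>2 (gen_inv \<psi>2 (\<psi>1 T))" using psi_gen_inv[OF g2 p1T] by simp
  also have "\<dots> \<le> psi_ext \<psi>2 (\<Sum>i<n. gen_inv \<psi>2 (u i))"
    by (rule psi_ext_antimono[OF g2 _ le]) (auto intro: sum_nonneg gen_inv_nonneg)
  finally show ?thesis using L by (simp add: arch_copula_def)
qed

lemma gronwall:
  fixes g :: "real \<Rightarrow> real"
  assumes sT: "s \<le> T" and cont: "continuous_on {s..T} g" and C: "C \<ge> 0"
    and le: "\<And>t. t \<in> {s..T} \<Longrightarrow> g t \<le> A + C * integral {s..t} g"
  shows "g T \<le> A * exp (C * (T - s))"
proof (cases "C = 0")
  case True then show ?thesis using le[of T] sT by simp
next
  case False
  then have Cp: "C > 0" using C by simp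
  define U where "U t = integral {s..t} g" for t
  define Z where "Z t = exp (- C * (t - s)) * (U t + A / C)" for t
  have Ucont: "continuous_on {s..T} U" unfolding U_def
    by (rule indefinite_integral_continuous_1[OF integrable_continuous_real[OF cont]])
  have Zcont: "continuous_on {s..T} Z" unfolding Z_def
    by (intro continuous_intros Ucont)
  have Ud: "(U has_real_derivative g x) (at x)" if "s < x" "x < T" for x
  proof -
    have "(U has_vector_derivative g x) (at x within {s..T})"
      unfolding U_def by (rule integral_has_vector_derivative[OF cont]) (use that in auto)
    then show ?thesis using that by (simp add: at_within_Icc_at has_real_derivative_iff_has_vector_derivative)
  qed
  have "Z T \<le> Z s"
  proof (rule DERIV_nonpos_imp_decreasing_open[OF sT _ Zcont])
    fix x assume x: "s < x" "x < T"
    have d: "(Z has_real_derivative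
      (exp (- C * (x - s)) * (- C) * (U x + A / C) + exp (- C * (x - s)) * g x)) (at x)"
    proof -
      have e: "((\<lambda>t. exp (- C * (t - s))) has_real_derivative (exp (- C * (x - s)) * (- C))) (at x)"
        by (auto intro!: derivative_eq_intros)
      have u: "((\<lambda>t. U t + A / C) has_real_derivative (g x + 0)) (at x)"
        by (rule DERIV_add[OF Ud[OF x] DERIV_const])
      show ?thesis unfolding Z_def using DERIV_mult[OF e u] by (simp add: mult.commute)
    qed
    have "g x \<le> A + C * U x" using le[of x] x unfolding U_def by auto
    moreover have "C * (U x + A / C) = C * U x + A" using Cp by (simp add: field_simps)
    ultimately have "g x - C * (U x + A / C) \<le> 0" by linarith
    then have "exp (- C * (x - s)) * (g x - C * (U x + A / C)) \<le> 0"
      by (simp add: mult_nonneg_nonpos)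
    moreover have "exp (- C * (x - s)) * (- C) * (U x + A / C) + exp (- C * (x - s)) * g x
        = exp (- C * (x - s)) * (g x - C * (U x + A / C))" by (simp add: algebra_simps)
    ultimately show "\<exists>y. (Z has_real_derivative y) (at x) \<and> y \<le> 0" using d by auto
  qed
  then have "exp (- C * (T - s)) * (U T + A / C) \<le> A / C" unfolding Z_def U_def by simp
  then have h: "inverse (exp (C * (T - s))) * (U T + A / C) \<le> A / C"
    by (simp add: exp_minus)
  have "U T + A / C = exp (C * (T - s)) * (inverse (exp (C * (T - s))) * (U T + A / C))"
    by simp
  also have "\<dots> \<le> exp (C * (T - s)) * (A / C)"
    by (rule mult_left_mono[OF h]) simp
  finally have "U T + A / C \<le> A / C * exp (C * (T - s))" by (simp add: mult.commute)
  then have "C * (U T + A / C) \<le> C * (A / C * exp (C * (T - s)))"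
    using Cp by (intro mult_left_mono) auto
  moreover have "C * (U T + A / C) = C * U T + A" "C * (A / C * exp (C * (T - s))) = A * exp (C * (T - s))"
    using Cp by (auto simp: field_simps)
  ultimately have "C * U T + A \<le> A * exp (C * (T - s))" by simp
  moreover have "g T \<le> A + C * U T" using le[of T] sT unfolding U_def by auto
  ultimately show ?thesis by simp
qed


lemma cdf_nonneg: assumes A: "abs_cont_cdf_nonneg F f" shows "0 \<le> F t"
proof -
  have m: "mono F" and z: "\<And>x. x < 0 \<Longrightarrow> F x = 0" using A by (auto simp: abs_cont_cdf_nonneg_def)
  show ?thesis
  proof (cases "t < 0")
    case True then show ?thesis using z by simp
  next
    case False
    then have "F (-1) \<le> F t" using m by (auto intro: monoD)
    then show ?thesis using z[of "-1"] by simp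
  qed
qed

lemma cdf_le1: assumes "abs_cont_cdf_nonneg F f" shows "F t \<le> 1"
proof -
  have m: "mono F" and l: "(F \<longlongrightarrow> 1) at_top" using assms by (auto simp: abs_cont_cdf_nonneg_def)
  have "eventually (\<lambda>y. F t \<le> F y) at_top"
    unfolding eventually_at_top_linorder by (rule exI[of _ t]) (auto intro: monoD[OF m])
  from tendsto_lowerbound[OF l this] show ?thesis by simp
qed

lemma cdf_diff:
  assumes A: "abs_cont_cdf_nonneg F f" and xy: "x \<le> y"
  shows "(f has_integral (F y - F x)) {x..y}"
proof -
  have hx: "(f has_integral F x) {..x}" and hy: "(f has_integral F y) {..y}"
    using A by (auto simp: abs_cont_cdf_nonneg_def)
  have "f integrable_on {x..y}"
    by (rule integrable_on_subinterval[of f "{..y}"]) (use hy in auto)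
  then obtain I where I: "(f has_integral I) {x..y}" by auto
  have "{..x} \<inter> {x..y} = {x}" using xy by auto
  then have "negligible ({..x} \<inter> {x..y})" by simp
  from has_integral_Un[OF hx I this] have "(f has_integral (F x + I)) ({..x} \<union> {x..y})" .
  moreover have "{..x} \<union> {x..y} = {..y}" using xy by auto
  ultimately have "(f has_integral (F x + I)) {..y}" by simp
  then have "F y = F x + I" using hy by (rule has_integral_unique[symmetric])
  then show ?thesis using I by simp
qed

lemma cdf_cont:
  assumes A: "abs_cont_cdf_nonneg F f"
  shows "continuous_on {a..b} F"
proof -
  have "(f has_integral (F b - F a)) {a..b}" if "a \<le> b" using cdf_diff[OF A that] .
  show ?thesis
  proof (cases "a \<le> b")
    case False then show ?thesis by simp
  next
    case True
    have fi: "f integrable_on {a..b}" using cdf_diff[OF A True] by auto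
    have "continuous_on {a..b} (\<lambda>t. F a + integral {a..t} f)"
      by (intro continuous_intros indefinite_integral_continuous_1[OF fi])
    moreover have "F a + integral {a..t} f = F t" if "t \<in> {a..b}" for t
    proof -
      have "(f has_integral (F t - F a)) {a..t}" using cdf_diff[OF A] that by auto
      then show ?thesis by (simp add: integral_unique)
    qed
    ultimately show ?thesis using continuous_on_eq by blast
  qed
qed

lemma rh_nonneg: "abs_cont_cdf_nonneg F f \<Longrightarrow> 0 \<le> rev_hazard F f t"
  unfolding rev_hazard_def using cdf_nonneg[of F f t]
  by (auto simp: abs_cont_cdf_nonneg_def)

lemma rh_eq: "F t > 0 \<Longrightarrow> f t = rev_hazard F f t * F t"
  unfolding rev_hazard_def by simp

lemma rh_ge:
  assumes A: "abs_cont_cdf_nonneg F f" and c: "c \<le> rev_hazard F f t" "0 \<le> c"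
  shows "c * F t \<le> f t"
proof (cases "F t > 0")
  case True
  then show ?thesis using c rh_eq[where F=F and t=t and f=f, OF True] by (simp add: mult_right_mono)
next
  case False
  then have "F t = 0" using cdf_nonneg[OF A, of t] by simp
  then show ?thesis using A by (simp add: abs_cont_cdf_nonneg_def)
qed

lemma F_upper:
  assumes A: "abs_cont_cdf_nonneg F f" and sT: "s \<le> T" and Fs: "F s > 0" and c: "c \<ge> 0"
    and r: "\<And>\<tau>. \<tau> \<in> {s..T} \<Longrightarrow> rev_hazard F f \<tau> \<le> c"
  shows "F T \<le> F s * exp (c * (T - s))"
proof (rule gronwall[OF sT cdf_cont[OF A] c])
  fix t assume t: "t \<in> {s..T}"
  have m: "mono F" using A by (simp add: abs_cont_cdf_nonneg_def)
  have hf: "(f has_integral (F t - F s)) {s..t}" using cdf_diff[OF A] t by auto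
  have Fi: "((\<lambda>\<tau>. c * F \<tau>) has_integral (c * integral {s..t} F)) {s..t}"
    by (rule has_integral_mult_right, rule integrable_integral, rule integrable_continuous_real,
        rule cdf_cont[OF A])
  have "F t - F s \<le> c * integral {s..t} F"
  proof (rule has_integral_le[OF hf Fi])
    fix \<tau> assume \<tau>: "\<tau> \<in> {s..t}"
    have "F s \<le> F \<tau>" using \<tau> m by (auto intro: monoD)
    then have Fp: "F \<tau> > 0" using Fs by simp
    have "rev_hazard F f \<tau> \<le> c" using r \<tau> t by auto
    then have "rev_hazard F f \<tau> * F \<tau> \<le> c * F \<tau>" using Fp by (simp add: mult_right_mono)
    then show "f \<tau> \<le> c * F \<tau>" using rh_eq[where F=F and t=\<tau> and f=f, OF Fp] by simp
  qed
  then show "F t \<le> F s + c * integral {s..t} F" by simp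
qed

lemma F_lower:
  assumes A: "abs_cont_cdf_nonneg F f" and sT: "s \<le> T" and c: "c \<ge> 0"
    and r: "\<And>\<tau>. \<tau> \<in> {s..T} \<Longrightarrow> c \<le> rev_hazard F f \<tau>"
  shows "F s * exp (c * (T - s)) \<le> F T"
proof -
  have "(\<lambda>t. - F t) T \<le> (- F s) * exp (c * (T - s))"
  proof (rule gronwall[OF sT _ c])
    show "continuous_on {s..T} (\<lambda>t. - F t)" by (intro continuous_intros cdf_cont[OF A])
    fix t assume t: "t \<in> {s..T}"
    have hf: "(f has_integral (F t - F s)) {s..t}" using cdf_diff[OF A] t by auto
    have Fi: "((\<lambda>\<tau>. c * F \<tau>) has_integral (c * integral {s..t} F)) {s..t}"
      by (rule has_integral_mult_right, rule integrable_integral, rule integrable_continuous_real,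
          rule cdf_cont[OF A])
    have "c * integral {s..t} F \<le> F t - F s"
    proof (rule has_integral_le[OF Fi hf])
      fix \<tau> assume \<tau>: "\<tau> \<in> {s..t}"
      show "c * F \<tau> \<le> f \<tau>" by (rule rh_ge[OF A _ c]) (use r \<tau> t in auto)
    qed
    then show "- F t \<le> - F s + c * integral {s..t} (\<lambda>t. - F t)" by simp
  qed
  then show ?thesis by simp
qed

lemma cdf_order_pos:
  assumes A: "abs_cont_cdf_nonneg FA fA" and B: "abs_cont_cdf_nonneg FB fB"
    and rAB: "\<forall>x>0. rev_hazard FB fB x \<le> rev_hazard FA fA x"
    and dec: "antimono_on {0<..} (rev_hazard FA fA) \<or> antimono_on {0<..} (rev_hazard FB fB)"
    and t0: "t0 > 0" and Bp: "FB t0 > 0"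
  shows "FA t0 \<le> FB t0"
proof -
  define rA where "rA = rev_hazard FA fA"
  define rB where "rB = rev_hazard FB fB"
  define C where "C = max (rA t0) (rB t0)"
  have C0: "C \<ge> 0" unfolding C_def rA_def using rh_nonneg[OF A] by (simp add: le_max_iff_disj)
  have rBC: "rB \<tau> \<le> C" if "\<tau> \<ge> t0" for \<tau>
  proof -
    have tp: "\<tau> > 0" using that t0 by simp
    from dec show ?thesis
    proof
      assume d: "antimono_on {0<..} (rev_hazard FA fA)"
      have "rA \<tau> \<le> rA t0" unfolding rA_def by (rule monotone_onD[OF d]) (use that t0 in auto)
      moreover have "rB \<tau> \<le> rA \<tau>" using rAB tp unfolding rA_def rB_def by auto
      ultimately show ?thesis unfolding C_def by simp
    next
      assume d: "antimono_on {0<..} (rev_hazard FB fB)"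
      have "rB \<tau> \<le> rB t0" unfolding rB_def by (rule monotone_onD[OF d]) (use that t0 in auto)
      then show ?thesis unfolding C_def by simp
    qed
  qed
  define E where "E t = FA t * FB t0 - FA t0 * FB t" for t
  define m where "m t = max 0 (- E t)" for t
  have mB: "mono FB" and mA: "mono FA" using A B by (auto simp: abs_cont_cdf_nonneg_def)
  have Epos: "E T \<ge> 0" if T: "T \<ge> t0" for T
  proof -
    have mcont: "continuous_on {t0..T} m" unfolding m_def E_def
      by (intro continuous_intros cdf_cont[OF A] cdf_cont[OF B])
    have "m T \<le> 0 * exp (C * (T - t0))"
    proof (rule gronwall[OF T mcont C0])
      fix t assume t: "t \<in> {t0..T}"
      have hA: "(fA has_integral (FA t - FA t0)) {t0..t}" using cdf_diff[OF A] t by auto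
      have hB: "(fB has_integral (FB t - FB t0)) {t0..t}" using cdf_diff[OF B] t by auto
      have hE: "((\<lambda>\<tau>. fA \<tau> * FB t0 - FA t0 * fB \<tau>) has_integral E t) {t0..t}"
      proof -
        have "((\<lambda>\<tau>. FB t0 * fA \<tau> - FA t0 * fB \<tau>) has_integral
               (FB t0 * (FA t - FA t0) - FA t0 * (FB t - FB t0))) {t0..t}"
          by (intro has_integral_diff has_integral_mult_right hA hB)
        moreover have "FB t0 * (FA t - FA t0) - FA t0 * (FB t - FB t0) = E t"
          unfolding E_def by (simp add: algebra_simps)
        ultimately show ?thesis by (simp add: mult.commute)
      qed
      have mcont': "continuous_on {t0..t} m" using mcont t by (auto intro: continuous_on_subset)
      have hm: "((\<lambda>\<tau>. - C * m \<tau>) has_integral (- C * integral {t0..t} m)) {t0..t}"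
        by (intro has_integral_mult_right integrable_integral integrable_continuous_real mcont')
      have "- C * integral {t0..t} m \<le> E t"
      proof (rule has_integral_le[OF hm hE])
        fix \<tau> assume \<tau>: "\<tau> \<in> {t0..t}"
        have tp: "\<tau> > 0" using \<tau> t0 by simp
        have FBp: "FB \<tau> > 0" using Bp mB \<tau> by (smt (verit) atLeastAtMost_iff monoD)
        have rB0: "0 \<le> rB \<tau>" unfolding rB_def by (rule rh_nonneg[OF B])
        have "rB \<tau> * FA \<tau> \<le> fA \<tau>"
          by (rule rh_ge[OF A _ rB0]) (use rAB tp in \<open>auto simp: rB_def\<close>)
        then have "rB \<tau> * FA \<tau> * FB t0 \<le> fA \<tau> * FB t0" using Bp by (simp add: mult_right_mono)
        moreover have "fB \<tau> = rB \<tau> * FB \<tau>" unfolding rB_def by (rule rh_eq[where F=FB and t=\<tau> and f=fB, OF FBp])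
        ultimately have "rB \<tau> * E \<tau> \<le> fA \<tau> * FB t0 - FA t0 * fB \<tau>"
          unfolding E_def by (simp add: algebra_simps)
        moreover have "- C * m \<tau> \<le> rB \<tau> * E \<tau>"
        proof (cases "E \<tau> \<ge> 0")
          case True then show ?thesis unfolding m_def using rB0 by simp
        next
          case False
          then have "C * E \<tau> \<le> rB \<tau> * E \<tau>" using rBC[of \<tau>] \<tau>
            by (intro mult_right_mono_neg) auto
          then show ?thesis unfolding m_def using False by simp
        qed
        ultimately show "- C * m \<tau> \<le> fA \<tau> * FB t0 - FA t0 * fB \<tau>" by linarith
      qed
      moreover have "0 \<le> C * integral {t0..t} m"
        using C0 by (intro mult_nonneg_nonneg integral_nonneg integrable_continuous_real mcont')
          (auto simp: m_def)
      ultimately show "m t \<le> 0 + C * integral {t0..t} m" unfolding m_def by simp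
    qed
    then show ?thesis unfolding m_def by simp
  qed
  have lA: "(FA \<longlongrightarrow> 1) at_top" and lB: "(FB \<longlongrightarrow> 1) at_top"
    using A B by (auto simp: abs_cont_cdf_nonneg_def)
  have "(E \<longlongrightarrow> 1 * FB t0 - FA t0 * 1) at_top" unfolding E_def
    by (intro tendsto_intros lA lB)
  moreover have "eventually (\<lambda>T. E T \<ge> 0) at_top"
    unfolding eventually_at_top_linorder using Epos by blast
  ultimately have "0 \<le> 1 * FB t0 - FA t0 * 1" by (rule tendsto_lowerbound) simp
  then show ?thesis by simp
qed

lemma cdf_order:
  assumes A: "abs_cont_cdf_nonneg FA fA" and B: "abs_cont_cdf_nonneg FB fB"
    and rAB: "\<forall>x>0. rev_hazard FB fB x \<le> rev_hazard FA fA x"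
    and dec: "antimono_on {0<..} (rev_hazard FA fA) \<or> antimono_on {0<..} (rev_hazard FB fB)"
    and t: "t > 0"
  shows "FA t \<le> FB t"
proof (cases "FB t > 0")
  case True then show ?thesis using cdf_order_pos[OF A B rAB dec t] by simp
next
  case False
  then have B0: "FB t = 0" using cdf_nonneg[OF B, of t] by simp
  show ?thesis
  proof (rule ccontr)
    assume "\<not> FA t \<le> FB t"
    then have Ap: "FA t > 0" using B0 by simp
    have lB: "(FB \<longlongrightarrow> 1) at_top" using B by (simp add: abs_cont_cdf_nonneg_def)
    then have "eventually (\<lambda>x. FB x > 1/2) at_top" by (rule order_tendstoD) simp
    then obtain N where N: "\<And>x. x \<ge> N \<Longrightarrow> FB x > 1/2" by (auto simp: eventually_at_top_linorder)
    define T where "T = max N t"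
    have T: "T \<ge> t" "FB T > 1/2" using N unfolding T_def by auto
    define v where "v = min (FA t) (FB T) / 2"
    have v: "0 < v" "v \<le> FB T" "v < FA t" unfolding v_def using Ap T by auto
    obtain t1 where t1: "t \<le> t1" "t1 \<le> T" "FB t1 = v"
      using IVT'[of FB t v T, OF _ _ _ cdf_cont[OF B]] B0 v T by auto
    have "FA t1 \<le> FB t1" using cdf_order_pos[OF A B rAB dec] t t1 v by auto
    moreover have "FA t \<le> FA t1" using A t1 by (auto simp: abs_cont_cdf_nonneg_def intro: monoD)
    ultimately show False using t1 v by simp
  qed
qed

definition kf :: "(real \<Rightarrow> real) \<Rightarrow> real \<Rightarrow> real" where
  "kf \<psi> y = real_of_ereal (gen_inv \<psi> (exp (- y)))"

lemma gen_inv_pos: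
  assumes g: "gb \<psi>" and u: "u > 0"
  shows "\<exists>t\<ge>0. gen_inv \<psi> u = ereal t \<and> \<psi> t \<le> u \<and> (\<forall>x\<ge>0. \<psi> x \<le> u \<longrightarrow> t \<le> x)"
proof -
  have "(\<psi> \<longlongrightarrow> 0) at_top" using g by (simp add: gb_def)
  then have "eventually (\<lambda>x. \<psi> x < u) at_top" using u by (simp add: order_tendstoD(2))
  then obtain N where N: "\<And>x. x \<ge> N \<Longrightarrow> \<psi> x < u" by (auto simp: eventually_at_top_linorder)
  have "max N 0 \<ge> 0" "\<psi> (max N 0) \<le> u" using N[of "max N 0"] by auto
  from gen_inv_attained[OF g this] show ?thesis .
qed

lemma kf_props:
  assumes g: "gb \<psi>" and y: "y \<ge> 0"
  shows "gen_inv \<psi> (exp (- y)) = ereal (kf \<psi> y)" "0 \<le> kf \<psi> y" "\<psi> (kf \<psi> y) \<le> exp (- y)"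
    "\<And>x. x \<ge> 0 \<Longrightarrow> \<psi> x \<le> exp (- y) \<Longrightarrow> kf \<psi> y \<le> x"
proof -
  obtain t where t: "t \<ge> 0" "gen_inv \<psi> (exp (- y)) = ereal t" "\<psi> t \<le> exp (- y)"
    "\<forall>x\<ge>0. \<psi> x \<le> exp (- y) \<longrightarrow> t \<le> x"
    using gen_inv_pos[OF g, of "exp (- y)"] by auto
  have "kf \<psi> y = t" unfolding kf_def t(2) by simp
  then show "gen_inv \<psi> (exp (- y)) = ereal (kf \<psi> y)" "0 \<le> kf \<psi> y" "\<psi> (kf \<psi> y) \<le> exp (- y)"
    "\<And>x. x \<ge> 0 \<Longrightarrow> \<psi> x \<le> exp (- y) \<Longrightarrow> kf \<psi> y \<le> x" using t by auto
qed

lemma kf_mono: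
  assumes g: "gb \<psi>" shows "mono_on {0..} (kf \<psi>)"
proof (rule mono_onI)
  fix y y' :: real assume yy: "y \<in> {0..}" "y' \<in> {0..}" "y \<le> y'"
  have "gen_inv \<psi> (exp (- y)) \<le> gen_inv \<psi> (exp (- y'))"
    by (rule gen_inv_antimono) (use yy in simp)
  then show "kf \<psi> y \<le> kf \<psi> y'" using kf_props(1)[OF g] yy by simp
qed

lemma kf_convex:
  assumes g: "gb \<psi>" and lc: "log_convex_on {0..} \<psi>"
  shows "convex_on {0..} (kf \<psi>)"
proof (rule convex_onI)
  show "convex {0::real..}" by (rule convex_real_interval)
  fix t y1 y2 :: real assume t: "0 < t" "t < 1" and y: "y1 \<in> {0..}" "y2 \<in> {0..}"
  define x1 where "x1 = kf \<psi> y1"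
  define x2 where "x2 = kf \<psi> y2"
  have x0: "0 \<le> x1" "0 \<le> x2" using kf_props(2)[OF g] y unfolding x1_def x2_def by auto
  have px: "\<psi> x1 \<le> exp (- y1)" "\<psi> x2 \<le> exp (- y2)"
    using kf_props(3)[OF g] y unfolding x1_def x2_def by auto
  have pos: "\<forall>x\<in>{0..}. \<psi> x > 0" and cv: "convex_on {0..} (\<lambda>x. ln (\<psi> x))"
    using lc by (auto simp: log_convex_on_def)
  have "ln (\<psi> x1) \<le> ln (exp (- y1))" using px(1) pos x0 by (subst ln_le_cancel_iff) auto
  then have l1: "ln (\<psi> x1) \<le> - y1" by simp
  have "ln (\<psi> x2) \<le> ln (exp (- y2))" using px(2) pos x0 by (subst ln_le_cancel_iff) auto
  then have l2: "ln (\<psi> x2) \<le> - y2" by simp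
  define z where "z = (1 - t) * x1 + t * x2"
  have z0: "0 \<le> z" unfolding z_def using x0 t by simp
  have "ln (\<psi> z) \<le> (1 - t) * ln (\<psi> x1) + t * ln (\<psi> x2)"
    using convex_onD[OF cv, of t x1 x2] t x0 unfolding z_def by simp
  also have "\<dots> \<le> (1 - t) * (- y1) + t * (- y2)"
    using l1 l2 t by (intro add_mono mult_left_mono) auto
  finally have "ln (\<psi> z) \<le> - ((1 - t) * y1 + t * y2)" by simp
  then have "exp (ln (\<psi> z)) \<le> exp (- ((1 - t) * y1 + t * y2))" by simp
  moreover have "exp (ln (\<psi> z)) = \<psi> z" using pos z0 by simp
  ultimately have "\<psi> z \<le> exp (- ((1 - t) * y1 + t * y2))" by simp
  moreover have "(1 - t) * y1 + t * y2 \<ge> 0" using y t by simp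
  ultimately have "kf \<psi> ((1 - t) * y1 + t * y2) \<le> z" using kf_props(4)[OF g _ z0] by blast
  then show "kf \<psi> ((1 - t) *\<^sub>R y1 + t *\<^sub>R y2) \<le> (1 - t) * kf \<psi> y1 + t * kf \<psi> y2"
    unfolding z_def x1_def x2_def by simp
qed

lemma convex_chord:
  fixes k :: "real \<Rightarrow> real"
  assumes cv: "convex_on {0..} k" and mo: "mono_on {0..} k"
    and y: "0 \<le> y4" "y4 \<le> y3" "y3 \<le> y2" "y2 \<le> y1" and n: "nA > 0" "nB > 0"
    and d: "nB * (y3 - y4) \<le> nA * (y1 - y2)"
  shows "nB * (k y3 - k y4) \<le> nA * (k y1 - k y2)"
proof (cases "y3 = y4")
  case True
  have "k y2 \<le> k y1" using mo y by (auto intro: mono_onD)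
  then show ?thesis using True n by simp
next
  case False
  then have y43: "y4 < y3" using y by simp
  then have "0 < nB * (y3 - y4)" using n by simp
  then have "0 < nA * (y1 - y2)" using d by simp
  then have y21: "y2 < y1" using n by (simp add: zero_less_mult_iff)
  define s2 where "s2 = (k y3 - k y4) / (y3 - y4)"
  define s1 where "s1 = (k y1 - k y2) / (y1 - y2)"
  have a: "(k y4 - k y3) / (y4 - y3) \<le> (k y4 - k y1) / (y4 - y1)"
    by (rule convex_on_slope_le(1)[OF cv]) (use y y43 y21 in auto)
  have b: "(k y4 - k y1) / (y4 - y1) \<le> (k y2 - k y1) / (y2 - y1)"
    by (rule convex_on_slope_le(2)[OF cv]) (use y y43 y21 in auto)
  have e1: "(k y4 - k y3) / (y4 - y3) = s2" unfolding s2_def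
    by (metis minus_diff_eq minus_divide_divide)
  have e2: "(k y2 - k y1) / (y2 - y1) = s1" unfolding s1_def
    by (metis minus_diff_eq minus_divide_divide)
  have s12: "s2 \<le> s1" using a b e1 e2 by simp
  have "k y4 \<le> k y3" using mo y by (auto intro: mono_onD)
  then have s20: "0 \<le> s2" unfolding s2_def using y43 by simp
  have "nB * (k y3 - k y4) = nB * (y3 - y4) * s2" unfolding s2_def using y43 by simp
  also have "\<dots> \<le> nA * (y1 - y2) * s2" using d s20 by (rule mult_right_mono)
  also have "\<dots> \<le> nA * (y1 - y2) * s1" using s12 n y21 by (intro mult_left_mono) auto
  also have "\<dots> = nA * (k y1 - k y2)" unfolding s1_def using y21 by simp
  finally show ?thesis .
qed

lemma chord_step:
  fixes k :: "real \<Rightarrow> real"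
  assumes A: "abs_cont_cdf_nonneg FA fA" and B: "abs_cont_cdf_nonneg FB fB"
    and rAB: "\<forall>x>0. rev_hazard FB fB x \<le> rev_hazard FA fA x"
    and dec: "antimono_on {0<..} (rev_hazard FA fA) \<or> antimono_on {0<..} (rev_hazard FB fB)"
    and cv: "convex_on {0..} k" and mo: "mono_on {0..} k"
    and n: "nA > 0" "nB > 0"
    and s: "0 < s1" "s1 < s2" "s2 \<le> s3" "s3 < s4"
    and eq: "nA * (s2 - s1) = nB * (s4 - s3)"
    and FA1: "FA s1 > 0"
  shows "nA * k (- ln (FA s2)) + nB * k (- ln (FB s3)) \<le> nA * k (- ln (FA s1)) + nB * k (- ln (FB s4))"
proof -
  obtain c where c0: "c \<ge> 0" and cA: "\<And>\<tau>. \<tau> \<in> {s1..s2} \<Longrightarrow> c \<le> rev_hazard FA fA \<tau>"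
    and cB: "\<And>\<tau>. \<tau> \<in> {s3..s4} \<Longrightarrow> rev_hazard FB fB \<tau> \<le> c"
  proof -
    from dec show ?thesis
    proof
      assume d: "antimono_on {0<..} (rev_hazard FA fA)"
      show ?thesis
      proof (rule that[of "rev_hazard FA fA s2"])
        show "0 \<le> rev_hazard FA fA s2" by (rule rh_nonneg[OF A])
        fix \<tau> assume "\<tau> \<in> {s1..s2}"
        then show "rev_hazard FA fA s2 \<le> rev_hazard FA fA \<tau>"
          using s by (intro monotone_onD[OF d]) auto
      next
        fix \<tau> assume \<tau>: "\<tau> \<in> {s3..s4}"
        have "rev_hazard FA fA \<tau> \<le> rev_hazard FA fA s2"
          using s \<tau> by (intro monotone_onD[OF d]) auto
        moreover have "rev_hazard FB fB \<tau> \<le> rev_hazard FA fA \<tau>" using rAB \<tau> s by auto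
        ultimately show "rev_hazard FB fB \<tau> \<le> rev_hazard FA fA s2" by simp
      qed
    next
      assume d: "antimono_on {0<..} (rev_hazard FB fB)"
      show ?thesis
      proof (rule that[of "rev_hazard FB fB s2"])
        show "0 \<le> rev_hazard FB fB s2" by (rule rh_nonneg[OF B])
        fix \<tau> assume \<tau>: "\<tau> \<in> {s1..s2}"
        have "rev_hazard FB fB s2 \<le> rev_hazard FB fB \<tau>"
          using s \<tau> by (intro monotone_onD[OF d]) auto
        moreover have "rev_hazard FB fB \<tau> \<le> rev_hazard FA fA \<tau>" using rAB \<tau> s by auto
        ultimately show "rev_hazard FB fB s2 \<le> rev_hazard FA fA \<tau>" by simp
      next
        fix \<tau> assume \<tau>: "\<tau> \<in> {s3..s4}"
        then show "rev_hazard FB fB \<tau> \<le> rev_hazard FB fB s2"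
          using s by (intro monotone_onD[OF d]) auto
      qed
    qed
  qed
  have mA: "mono FA" and mB: "mono FB" using A B by (auto simp: abs_cont_cdf_nonneg_def)
  have f12: "FA s1 \<le> FA s2" "FA s2 \<le> FA s3" "FB s3 \<le> FB s4"
    using s by (auto intro: monoD[OF mA] monoD[OF mB])
  have f3: "FA s3 \<le> FB s3" using cdf_order[OF A B rAB dec] s by simp
  have FB4: "FB s4 \<le> 1" by (rule cdf_le1[OF B])
  have FA2: "FA s2 > 0" "FB s3 > 0" "FB s4 > 0" using f12 f3 FA1 by auto
  have lowA: "FA s1 * exp (c * (s2 - s1)) \<le> FA s2"
    by (rule F_lower[OF A _ c0 cA]) (use s in auto)
  have upB: "FB s4 \<le> FB s3 * exp (c * (s4 - s3))"
    by (rule F_upper[OF B _ FA2(2) c0 cB]) (use s in auto)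
  define y1 where "y1 = - ln (FA s1)"
  define y2 where "y2 = - ln (FA s2)"
  define y3 where "y3 = - ln (FB s3)"
  define y4 where "y4 = - ln (FB s4)"
  have "ln (FA s1 * exp (c * (s2 - s1))) \<le> ln (FA s2)"
    using lowA FA1 FA2 by (subst ln_le_cancel_iff) auto
  then have d1: "c * (s2 - s1) \<le> y1 - y2" unfolding y1_def y2_def using FA1 by (simp add: ln_mult)
  have "ln (FB s4) \<le> ln (FB s3 * exp (c * (s4 - s3)))"
    using upB FA2 by (subst ln_le_cancel_iff) auto
  then have d2: "y3 - y4 \<le> c * (s4 - s3)" unfolding y3_def y4_def using FA2 by (simp add: ln_mult)
  have "nB * (y3 - y4) \<le> nB * (c * (s4 - s3))" using d2 n by simp
  also have "\<dots> = c * (nA * (s2 - s1))" using eq by simp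
  also have "\<dots> \<le> nA * (y1 - y2)" using d1 n by (simp add: mult.left_commute)
  finally have dd: "nB * (y3 - y4) \<le> nA * (y1 - y2)" .
  have yo: "0 \<le> y4" "y4 \<le> y3" "y3 \<le> y2" "y2 \<le> y1"
    unfolding y1_def y2_def y3_def y4_def using FB4 FA2 FA1 f12 f3 by auto
  from convex_chord[OF cv mo yo n dd]
  have "nB * (k y3 - k y4) \<le> nA * (k y1 - k y2)" .
  then show ?thesis unfolding y1_def[symmetric] y2_def[symmetric] y3_def[symmetric] y4_def[symmetric]
    by (simp add: algebra_simps)
qed

lemma monoG:
  fixes k :: "real \<Rightarrow> real"
  assumes A: "abs_cont_cdf_nonneg F f" and mo: "mono_on {0..} k" and p: "F p > 0" and pq: "p \<le> q"
  shows "k (- ln (F q)) \<le> k (- ln (F p))"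
proof -
  have "F p \<le> F q" using A pq by (auto simp: abs_cont_cdf_nonneg_def intro: monoD)
  moreover have "F q \<le> 1" by (rule cdf_le1[OF A])
  ultimately have "- ln (F q) \<le> - ln (F p)" "0 \<le> - ln (F q)" using p by auto
  then show ?thesis using mo by (auto intro: mono_onD)
qed

lemma core:
  fixes k :: "real \<Rightarrow> real"
  assumes A: "abs_cont_cdf_nonneg FA fA" and B: "abs_cont_cdf_nonneg FB fB"
    and rAB: "\<forall>x>0. rev_hazard FB fB x \<le> rev_hazard FA fA x"
    and dec: "antimono_on {0<..} (rev_hazard FA fA) \<or> antimono_on {0<..} (rev_hazard FB fB)"
    and cv: "convex_on {0..} k" and mo: "mono_on {0..} k"
    and n: "nA > 0" "nB > 0" and x: "x > 0"
    and l: "0 < lA" "lA \<le> lB" and m: "mA \<le> mB" "lA \<le> mA"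
    and tot: "nA * lA + nB * lB \<le> nA * mA + nB * mB"
    and FAl: "FA (lA * x) > 0"
  shows "nA * k (- ln (FA (mA * x))) + nB * k (- ln (FB (mB * x)))
         \<le> nA * k (- ln (FA (lA * x))) + nB * k (- ln (FB (lB * x)))"
proof -
  have posA: "FA (q * x) > 0" if "lA \<le> q" for q
  proof -
    have mA: "mono FA" using A by (simp add: abs_cont_cdf_nonneg_def)
    have "lA * x \<le> q * x" using that x by (simp add: mult_right_mono)
    then have "FA (lA * x) \<le> FA (q * x)" by (rule monoD[OF mA])
    then show ?thesis using FAl by simp
  qed
  have posB: "FB (q * x) > 0" if "lA \<le> q" for q
  proof -
    have "FA (q * x) \<le> FB (q * x)" using cdf_order[OF A B rAB dec] that l x by simp
    then show ?thesis using posA[OF that] by simp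
  qed
  define Phi where "Phi p q = nA * k (- ln (FA (p * x))) + nB * k (- ln (FB (q * x)))" for p q
  have Pmono: "Phi p' q' \<le> Phi p q" if "lA \<le> p" "p \<le> p'" "lA \<le> q" "q \<le> q'" for p q p' q'
  proof -
    have "k (- ln (FA (p' * x))) \<le> k (- ln (FA (p * x)))"
      by (rule monoG[OF A mo posA[OF that(1)]]) (use that x in \<open>simp add: mult_right_mono\<close>)
    moreover have "k (- ln (FB (q' * x))) \<le> k (- ln (FB (q * x)))"
      by (rule monoG[OF B mo posB[OF that(3)]]) (use that x in \<open>simp add: mult_right_mono\<close>)
    ultimately show ?thesis unfolding Phi_def using n
      by (intro add_mono mult_left_mono) auto
  qed
  show ?thesis
  proof (cases "lB \<le> mB")
    case True
    then show ?thesis using Pmono[of lA mA lB mB] l m unfolding Phi_def by simp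
  next
    case False
    then have mlB: "mB < lB" by simp
    define c where "c = (nA * lA + nB * lB) / (nA + nB)"
    define a' where "a' = min mA c"
    define b' where "b' = lB - nA * (a' - lA) / nB"
    have idc: "(nA + nB) * c = nA * lA + nB * lB" unfolding c_def using n by simp
    have idb: "nA * a' + nB * b' = nA * lA + nB * lB" unfolding b'_def using n
      by (simp add: field_simps)
    have idb2: "nB * (lB - b') = nA * (a' - lA)" unfolding b'_def using n by (simp add: field_simps)
    have "nB * lA \<le> nB * lB" using l n by (intro mult_left_mono) auto
    then have "(nA + nB) * lA \<le> (nA + nB) * c" unfolding idc by (simp add: distrib_right)
    then have lc: "lA \<le> c" using n by simp
    have la: "lA \<le> a'" unfolding a'_def using lc m by simp
    have "(nA + nB) * a' \<le> (nA + nB) * c" unfolding a'_def using n by (intro mult_left_mono) auto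
    then have "nB * a' \<le> nB * b'" using idb idc by (simp add: algebra_simps)
    then have ab: "a' \<le> b'" using n by simp
    have "0 \<le> nA * (a' - lA)" using la n by simp
    then have "nB * 0 \<le> nB * (lB - b')" using idb2 by simp
    then have bl: "b' \<le> lB" using n by (simp only: mult_le_cancel_left_pos)
    have am: "a' \<le> mA" unfolding a'_def by simp
    have bm: "b' \<le> mB"
    proof (cases "mA \<le> c")
      case True
      then have "a' = mA" unfolding a'_def by simp
      then have "nB * b' \<le> nB * mB" using idb tot by simp
      then show ?thesis using n by simp
    next
      case False
      then have "a' = c" unfolding a'_def by simp
      then have "nA * c + nB * b' = (nA + nB) * c" using idb idc by simp
      then have "nB * b' = nB * c" by (simp add: distrib_right)
      then have "b' = c" using n by simp
      then show ?thesis using False m by simp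
    qed
    have step1: "Phi a' b' \<le> Phi lA lB"
    proof (cases "a' = lA")
      case True
      then have "b' = lB" unfolding b'_def by simp
      then show ?thesis using True by simp
    next
      case False
      then have la': "lA < a'" using la by simp
      then have "0 < nB * (lB - b')" using idb2 n by simp
      then have bl': "b' < lB" using n by (simp add: zero_less_mult_iff)
      have "nA * k (- ln (FA (a' * x))) + nB * k (- ln (FB (b' * x)))
          \<le> nA * k (- ln (FA (lA * x))) + nB * k (- ln (FB (lB * x)))"
      proof (rule chord_step[OF A B rAB dec cv mo n])
        show "0 < lA * x" using l x by simp
        show "lA * x < a' * x" using la' x by simp
        show "a' * x \<le> b' * x" using ab x by (simp add: mult_right_mono)
        show "b' * x < lB * x" using bl' x by simp
        show "nA * (a' * x - lA * x) = nB * (lB * x - b' * x)"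
        proof -
          have "nA * (a' * x - lA * x) = (nA * (a' - lA)) * x" by (simp add: algebra_simps)
          also have "\<dots> = (nB * (lB - b')) * x" using idb2 by simp
          also have "\<dots> = nB * (lB * x - b' * x)" by (simp add: algebra_simps)
          finally show ?thesis .
        qed
        show "FA (lA * x) > 0" by (rule FAl)
      qed
      then show ?thesis unfolding Phi_def .
    qed
    have step2: "Phi mA mB \<le> Phi a' b'"
      by (rule Pmono) (use la ab am bm in auto)
    show ?thesis using step1 step2 unfolding Phi_def by simp
  qed
qed

definition cop2 :: "(real \<Rightarrow> real) \<Rightarrow> nat \<Rightarrow> nat \<Rightarrow> real \<Rightarrow> real \<Rightarrow> real" where
  "cop2 \<psi> n1 n2 u1 u2 = (if gen_inv \<psi> u1 = \<infinity> \<or> gen_inv \<psi> u2 = \<infinity> then 0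
     else \<psi> (real n1 * real_of_ereal (gen_inv \<psi> u1) + real n2 * real_of_ereal (gen_inv \<psi> u2)))"

lemma cop2_swap: "cop2 \<psi> n1 n2 u1 u2 = cop2 \<psi> n2 n1 u2 u1"
  unfolding cop2_def by (auto simp: add.commute)

lemma sum_two: "(\<Sum>i<n1+n2. if i < n1 then (a::real) else b) = real n1 * a + real n2 * b"
proof (induction n2)
  case 0
  have "(\<Sum>i<n1. if i < n1 then a else b) = (\<Sum>i<n1. a)" by (rule sum.cong) auto
  then show ?case by simp
next
  case (Suc n2)
  then show ?case by (simp add: algebra_simps)
qed

lemma copula_eval:
  assumes n: "n1 \<ge> 1" "n2 \<ge> 1"
  shows "arch_copula \<psi> (n1 + n2) (\<lambda>i. if i < n1 then u1 else u2) = cop2 \<psi> n1 n2 u1 u2"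
proof -
  have sumif: "(\<Sum>i<n1+n2. gen_inv \<psi> (if i < n1 then u1 else u2))
      = (\<Sum>i<n1+n2. if i < n1 then gen_inv \<psi> u1 else gen_inv \<psi> u2)"
    by (rule sum.cong) auto
  show ?thesis
  proof (cases "gen_inv \<psi> u1 = \<infinity> \<or> gen_inv \<psi> u2 = \<infinity>")
    case True
    have "\<exists>i\<in>{..<n1+n2}. (if i < n1 then gen_inv \<psi> u1 else gen_inv \<psi> u2) = \<infinity>"
    proof (cases "gen_inv \<psi> u1 = \<infinity>")
      case True then show ?thesis using n by (intro bexI[of _ 0]) auto
    next
      case False then show ?thesis using True n by (intro bexI[of _ n1]) auto
    qed
    then have "(\<Sum>i<n1+n2. gen_inv \<psi> (if i < n1 then u1 else u2)) = \<infinity>"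
      unfolding sumif by (simp add: sum_Pinfty)
    then show ?thesis using True unfolding arch_copula_def cop2_def psi_ext_def by simp
  next
    case False
    define t1 where "t1 = real_of_ereal (gen_inv \<psi> u1)"
    define t2 where "t2 = real_of_ereal (gen_inv \<psi> u2)"
    have e1: "gen_inv \<psi> u1 = ereal t1" unfolding t1_def using False gen_inv_nonneg[of \<psi> u1]
      by (cases "gen_inv \<psi> u1") auto
    have e2: "gen_inv \<psi> u2 = ereal t2" unfolding t2_def using False gen_inv_nonneg[of \<psi> u2]
      by (cases "gen_inv \<psi> u2") auto
    have "(\<Sum>i<n1+n2. gen_inv \<psi> (if i < n1 then u1 else u2))
        = (\<Sum>i<n1+n2. ereal (if i < n1 then t1 else t2))"
      unfolding sumif e1 e2 by (rule sum.cong) auto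
    also have "\<dots> = ereal (real n1 * t1 + real n2 * t2)" by (simp only: sum_ereal sum_two)
    finally show ?thesis using False unfolding arch_copula_def cop2_def psi_ext_def t1_def t2_def
      by simp
  qed
qed

lemma cop2_nonneg: assumes g: "gb \<psi>" shows "0 \<le> cop2 \<psi> n1 n2 u1 u2"
proof -
  have p: "\<And>x. x \<ge> 0 \<Longrightarrow> 0 \<le> \<psi> x" using g by (simp add: gb_def)
  have a: "0 \<le> real_of_ereal (gen_inv \<psi> u1)" "0 \<le> real_of_ereal (gen_inv \<psi> u2)"
    by (rule real_of_ereal_pos[OF gen_inv_nonneg])+
  have "0 \<le> real n1 * real_of_ereal (gen_inv \<psi> u1) + real n2 * real_of_ereal (gen_inv \<psi> u2)"
    using a by simp
  then show ?thesis unfolding cop2_def using p by simp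
qed

lemma gen_inv_lc:
  assumes g: "gb \<psi>" and lc: "log_convex_on {0..} \<psi>"
  shows "gen_inv \<psi> 0 = \<infinity>"
    and "\<And>u. 0 < u \<Longrightarrow> u \<le> 1 \<Longrightarrow> gen_inv \<psi> u = ereal (kf \<psi> (- ln u))"
proof -
  have e: "{x. 0 \<le> x \<and> \<psi> x \<le> 0} = {}" using lc by (force simp: log_convex_on_def)
  show "gen_inv \<psi> 0 = \<infinity>" unfolding gen_inv_def e by (simp add: top_ereal_def)
next
  fix u :: real assume u: "0 < u" "u \<le> 1"
  have "0 \<le> - ln u" using u by simp
  from kf_props(1)[OF g this] show "gen_inv \<psi> u = ereal (kf \<psi> (- ln u))" using u by simp
qed

lemma step2:
  fixes nA nB :: nat
  assumes g: "gb \<psi>" and lc: "log_convex_on {0..} \<psi>"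
    and A: "abs_cont_cdf_nonneg FA fA" and B: "abs_cont_cdf_nonneg FB fB"
    and rAB: "\<forall>x>0. rev_hazard FB fB x \<le> rev_hazard FA fA x"
    and dec: "antimono_on {0<..} (rev_hazard FA fA) \<or> antimono_on {0<..} (rev_hazard FB fB)"
    and n: "nA \<ge> 1" "nB \<ge> 1" and x: "x > 0"
    and l: "0 < lA" "lA \<le> lB" and m: "mA \<le> mB" "lA \<le> mA"
    and tot: "real nA * lA + real nB * lB \<le> real nA * mA + real nB * mB"
  shows "cop2 \<psi> nA nB (FA (lA * x)) (FB (lB * x)) \<le> cop2 \<psi> nA nB (FA (mA * x)) (FB (mB * x))"
proof (cases "FA (lA * x) = 0 \<or> FB (lB * x) = 0")
  case True
  then have "cop2 \<psi> nA nB (FA (lA * x)) (FB (lB * x)) = 0"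
    unfolding cop2_def using gen_inv_lc(1)[OF g lc] by auto
  then show ?thesis using cop2_nonneg[OF g] by simp
next
  case False
  have mA: "mono FA" and mB: "mono FB" using A B by (auto simp: abs_cont_cdf_nonneg_def)
  have FAl: "FA (lA * x) > 0" using False cdf_nonneg[OF A, of "lA * x"] by simp
  have FBl: "FB (lB * x) > 0" using False cdf_nonneg[OF B, of "lB * x"] by simp
  have "lA * x \<le> mA * x" using m x by (simp add: mult_right_mono)
  then have FAm: "FA (mA * x) > 0" using FAl monoD[OF mA] by (meson less_le_trans)
  have "mA * x \<le> mB * x" using m x by (simp add: mult_right_mono)
  then have "FA (mA * x) \<le> FA (mB * x)" by (rule monoD[OF mA])
  moreover have "FA (mB * x) \<le> FB (mB * x)"
    using cdf_order[OF A B rAB dec] l m x by simp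
  ultimately have FBm: "FB (mB * x) > 0" using FAm by simp
  define k where "k = kf \<psi>"
  have gi: "\<And>u. 0 < u \<Longrightarrow> u \<le> 1 \<Longrightarrow> gen_inv \<psi> u = ereal (k (- ln u))"
    unfolding k_def by (rule gen_inv_lc(2)[OF g lc])
  have le1: "FA (lA * x) \<le> 1" "FB (lB * x) \<le> 1" "FA (mA * x) \<le> 1" "FB (mB * x) \<le> 1"
    using cdf_le1[OF A] cdf_le1[OF B] by auto
  have L: "cop2 \<psi> nA nB (FA (lA * x)) (FB (lB * x))
      = \<psi> (real nA * k (- ln (FA (lA * x))) + real nB * k (- ln (FB (lB * x))))"
    unfolding cop2_def using gi FAl FBl le1 by simp
  have R: "cop2 \<psi> nA nB (FA (mA * x)) (FB (mB * x))
      = \<psi> (real nA * k (- ln (FA (mA * x))) + real nB * k (- ln (FB (mB * x))))"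
    unfolding cop2_def using gi FAm FBm le1 by simp
  have core: "real nA * k (- ln (FA (mA * x))) + real nB * k (- ln (FB (mB * x)))
         \<le> real nA * k (- ln (FA (lA * x))) + real nB * k (- ln (FB (lB * x)))"
    unfolding k_def
    by (rule core[OF A B rAB dec kf_convex[OF g lc] kf_mono[OF g]]) (use n x l m tot FAl in auto)
  have k0: "0 \<le> k (- ln (FA (mA * x)))" "0 \<le> k (- ln (FB (mB * x)))"
    unfolding k_def using kf_props(2)[OF g] FAm FBm le1 by auto
  have "0 \<le> real nA * k (- ln (FA (mA * x))) + real nB * k (- ln (FB (mB * x)))"
    using k0 by simp
  moreover have am: "antimono_on {0..} \<psi>" using g by (simp add: gb_def)
  ultimately have "\<psi> (real nA * k (- ln (FA (lA * x))) + real nB * k (- ln (FB (lB * x))))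
    \<le> \<psi> (real nA * k (- ln (FA (mA * x))) + real nB * k (- ln (FB (mB * x))))"
    using core by (intro monotone_onD[OF am]) auto
  then show ?thesis unfolding L R .
qed

lemma sort_two:
  fixes a b :: real
  shows "sort (replicate n1 a @ replicate n2 b) =
    (if a \<le> b then replicate n1 a @ replicate n2 b else replicate n2 b @ replicate n1 a)"
proof (cases "a \<le> b")
  case True
  have "sorted (replicate n1 a @ replicate n2 b)" using True by (auto simp: sorted_append)
  then show ?thesis using True by (intro properties_for_sort) auto
next
  case False
  have "sorted (replicate n2 b @ replicate n1 a)" using False by (auto simp: sorted_append)
  then have "sort (replicate n1 a @ replicate n2 b) = replicate n2 b @ replicate n1 a"
    by (intro properties_for_sort) (auto simp: add.commute)
  then show ?thesis using False by simp
qed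

lemma take1_rep: "n \<ge> 1 \<Longrightarrow> sum_list (take 1 (replicate n a @ ys)) = (a::real)"
  by (cases n) auto

lemma maj_facts:
  fixes a1 a2 b1 b2 :: real
  assumes n: "n1 \<ge> 1" "n2 \<ge> 1"
    and w: "wmaj_ge (replicate n1 a1 @ replicate n2 a2) (replicate n1 b1 @ replicate n2 b2)"
  shows "min a1 a2 \<le> min b1 b2" "real n1 * a1 + real n2 * a2 \<le> real n1 * b1 + real n2 * b2"
proof -
  let ?a = "replicate n1 a1 @ replicate n2 a2" and ?b = "replicate n1 b1 @ replicate n2 b2"
  have len: "length ?a = n1 + n2" by simp
  have w1: "sum_list (take 1 (sort ?a)) \<le> sum_list (take 1 (sort ?b))"
    using w n unfolding wmaj_ge_def len by auto
  have "sum_list (take 1 (sort ?a)) = min a1 a2" unfolding sort_two using n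
    by (auto simp: take1_rep min_def)
  moreover have "sum_list (take 1 (sort ?b)) = min b1 b2" unfolding sort_two using n
    by (auto simp: take1_rep min_def)
  ultimately show "min a1 a2 \<le> min b1 b2" using w1 by simp
  have w2: "sum_list (sort ?a) \<le> sum_list (sort ?b)"
    using w n unfolding wmaj_ge_def len by (auto dest!: bspec[where x="n1+n2"])
  have "sum_list (sort ?a) = real n1 * a1 + real n2 * a2" unfolding sort_two
    by (auto simp: sum_list_replicate)
  moreover have "sum_list (sort ?b) = real n1 * b1 + real n2 * b2" unfolding sort_two
    by (auto simp: sum_list_replicate)
  ultimately show "real n1 * a1 + real n2 * a2 \<le> real n1 * b1 + real n2 * b2" using w2 by simp
qed

theorem theorem3p1:
  fixes M :: "'a measure" and N :: "'b measure"
    and X :: "nat \<Rightarrow> 'a \<Rightarrow> real" and Y :: "nat \<Rightarrow> 'b \<Rightarrow> real"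
    and n1 n2 :: nat
    and psi1 psi2 F1 F2 f1 f2 :: "real \<Rightarrow> real"
    and lam1 lam2 mu1 mu2 :: real
  assumes n1: "n1 \<ge> 1" and n2: "n2 \<ge> 1"
    and F1: "abs_cont_cdf_nonneg F1 f1" and F2: "abs_cont_cdf_nonneg F2 f2"
    and gen1: "arch_generator (n1 + n2) psi1" and gen2: "arch_generator (n1 + n2) psi2"
    and lam: "lam1 > 0" "lam2 > 0" and mu: "mu1 > 0" "mu2 > 0"
    and M: "prob_space M" and N: "prob_space N"
    and Xrv: "\<And>i. i < n1 + n2 \<Longrightarrow> X i \<in> borel_measurable M"
    and Yrv: "\<And>i. i < n1 + n2 \<Longrightarrow> Y i \<in> borel_measurable N"
    and Xmarg1: "\<And>i x. i < n1 \<Longrightarrow> measure M {\<omega> \<in> space M. X i \<omega> \<le> x} = F1 (lam1 * x)"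
    and Xmarg2: "\<And>i x. n1 \<le> i \<Longrightarrow> i < n1 + n2 \<Longrightarrow>
                   measure M {\<omega> \<in> space M. X i \<omega> \<le> x} = F2 (lam2 * x)"
    and Ymarg1: "\<And>i x. i < n1 \<Longrightarrow> measure N {\<omega> \<in> space N. Y i \<omega> \<le> x} = F1 (mu1 * x)"
    and Ymarg2: "\<And>i x. n1 \<le> i \<Longrightarrow> i < n1 + n2 \<Longrightarrow>
                   measure N {\<omega> \<in> space N. Y i \<omega> \<le> x} = F2 (mu2 * x)"
    and Xjoint: "\<And>z. measure M {\<omega> \<in> space M. \<forall>i < n1 + n2. X i \<omega> \<le> z i}
                   = arch_copula psi1 (n1 + n2)
                       (\<lambda>i. if i < n1 then F1 (lam1 * z i) else F2 (lam2 * z i))"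
    and Yjoint: "\<And>z. measure N {\<omega> \<in> space N. \<forall>i < n1 + n2. Y i \<omega> \<le> z i}
                   = arch_copula psi2 (n1 + n2)
                       (\<lambda>i. if i < n1 then F1 (mu1 * z i) else F2 (mu2 * z i))"
    and supadd: "super_additive_on {0..} (\<lambda>x. gen_inv psi2 (psi1 x))"
    and logcvx: "log_convex_on {0..} psi1 \<or> log_convex_on {0..} psi2"
    and rdec: "antimono_on {0<..} (rev_hazard F1 f1) \<or> antimono_on {0<..} (rev_hazard F2 f2)"
    and cases:
      "((\<forall>x > 0. rev_hazard F1 f1 x \<ge> rev_hazard F2 f2 x) \<and> n1 \<ge> n2 \<and>
          lam1 \<le> lam2 \<and> mu1 \<le> mu2) \<or>
       ((\<forall>x > 0. rev_hazard F1 f1 x \<le> rev_hazard F2 f2 x) \<and> n1 \<le> n2 \<and>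
          lam1 \<ge> lam2 \<and> mu1 \<ge> mu2)"
    and maj: "wmaj_ge (replicate n1 lam1 @ replicate n2 lam2) (replicate n1 mu1 @ replicate n2 mu2)"
  shows "\<forall>x. measure N {\<omega> \<in> space N. Max ((\<lambda>i. Y i \<omega>) ` {..<n1 + n2}) > x}
             \<le> measure M {\<omega> \<in> space M. Max ((\<lambda>i. X i \<omega>) ` {..<n1 + n2}) > x}"
proof
  fix x :: real
  have g1: "gb psi1" by (rule gb_of_arch[OF gen1])
  have g2: "gb psi2" by (rule gb_of_arch[OF gen2])
  define vX where "vX = (\<lambda>i. if i < n1 then F1 (lam1 * x) else F2 (lam2 * x))"
  define vY where "vY = (\<lambda>i. if i < n1 then F1 (mu1 * x) else F2 (mu2 * x))"
  have rX: "\<And>i. i < n1 + n2 \<Longrightarrow> 0 \<le> vX i \<and> vX i \<le> 1"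
    unfolding vX_def using cdf_nonneg[OF F1] cdf_nonneg[OF F2] cdf_le1[OF F1] cdf_le1[OF F2] by auto
  have rY: "\<And>i. i < n1 + n2 \<Longrightarrow> 0 \<le> vY i \<and> vY i \<le> 1"
    unfolding vY_def using cdf_nonneg[OF F1] cdf_nonneg[OF F2] cdf_le1[OF F1] cdf_le1[OF F2] by auto
  have mf: "min lam1 lam2 \<le> min mu1 mu2"
    "real n1 * lam1 + real n2 * lam2 \<le> real n1 * mu1 + real n2 * mu2"
    using maj_facts[OF n1 n2 maj] by auto
  have st2: "arch_copula \<psi> (n1 + n2) vX \<le> arch_copula \<psi> (n1 + n2) vY"
    if g: "gb \<psi>" and lc: "log_convex_on {0..} \<psi>" for \<psi>
  proof (cases "x > 0")
    case False
    have "vX = vY"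
    proof (cases "x = 0")
      case True
      have e1: "lam1 * x = mu1 * x" and e2: "lam2 * x = mu2 * x" using True by simp_all
      show ?thesis unfolding vX_def vY_def e1 e2 ..
    next
      case False
      then have xn: "x < 0" using \<open>\<not> x > 0\<close> by simp
      have z1: "\<And>c. c > 0 \<Longrightarrow> F1 (c * x) = 0" using F1 xn
        by (auto simp: abs_cont_cdf_nonneg_def mult_pos_neg)
      have z2: "\<And>c. c > 0 \<Longrightarrow> F2 (c * x) = 0" using F2 xn
        by (auto simp: abs_cont_cdf_nonneg_def mult_pos_neg)
      show ?thesis unfolding vX_def vY_def using z1 z2 lam mu by auto
    qed
    then show ?thesis by simp
  next
    case True
    have eX: "arch_copula \<psi> (n1 + n2) vX = cop2 \<psi> n1 n2 (F1 (lam1 * x)) (F2 (lam2 * x))"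
      unfolding vX_def by (rule copula_eval[OF n1 n2])
    have eY: "arch_copula \<psi> (n1 + n2) vY = cop2 \<psi> n1 n2 (F1 (mu1 * x)) (F2 (mu2 * x))"
      unfolding vY_def by (rule copula_eval[OF n1 n2])
    from cases show ?thesis
    proof
      assume a: "(\<forall>x > 0. rev_hazard F1 f1 x \<ge> rev_hazard F2 f2 x) \<and> n1 \<ge> n2 \<and>
          lam1 \<le> lam2 \<and> mu1 \<le> mu2"
      have "cop2 \<psi> n1 n2 (F1 (lam1 * x)) (F2 (lam2 * x)) \<le> cop2 \<psi> n1 n2 (F1 (mu1 * x)) (F2 (mu2 * x))"
        by (rule step2[OF g lc F1 F2 _ rdec n1 n2 True]) (use a lam mu mf in auto)
      then show ?thesis unfolding eX eY .
    next
      assume b: "(\<forall>x > 0. rev_hazard F1 f1 x \<le> rev_hazard F2 f2 x) \<and> n1 \<le> n2 \<and>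
          lam1 \<ge> lam2 \<and> mu1 \<ge> mu2"
      have dec': "antimono_on {0<..} (rev_hazard F2 f2) \<or> antimono_on {0<..} (rev_hazard F1 f1)"
        using rdec by blast
      have "min lam1 lam2 = lam2" "min mu1 mu2 = mu2" using b by auto
      then have lm: "lam2 \<le> mu2" using mf(1) by simp
      have "cop2 \<psi> n2 n1 (F2 (lam2 * x)) (F1 (lam1 * x)) \<le> cop2 \<psi> n2 n1 (F2 (mu2 * x)) (F1 (mu1 * x))"
        by (rule step2[OF g lc F2 F1 _ dec' n2 n1 True]) (use b lam mu mf lm in \<open>auto simp: add.commute\<close>)
      then show ?thesis unfolding eX eY by (simp add: cop2_swap[of _ n1])
    qed
  qed
  have main: "arch_copula psi1 (n1 + n2) vX \<le> arch_copula psi2 (n1 + n2) vY"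
    using logcvx
  proof
    assume "log_convex_on {0..} psi1"
    from st2[OF g1 this] step1[of psi1 psi2 "n1 + n2" vY, OF g1 g2 supadd rY] show ?thesis by simp
  next
    assume "log_convex_on {0..} psi2"
    from step1[of psi1 psi2 "n1 + n2" vX, OF g1 g2 supadd rX] st2[OF g2 this] show ?thesis by simp
  qed
  have ne: "{..<n1 + n2} \<noteq> {}" using n1 by auto
  have SX: "{\<omega> \<in> space M. \<forall>i\<in>{..<n1 + n2}. X i \<omega> \<le> x} \<in> sets M"
    by (rule sets.sets_Collect_finite_All'[OF _ _ ne])
       (use Xrv in \<open>auto simp: borel_measurable_iff_le\<close>)
  have SY: "{\<omega> \<in> space N. \<forall>i\<in>{..<n1 + n2}. Y i \<omega> \<le> x} \<in> sets N"
    by (rule sets.sets_Collect_finite_All'[OF _ _ ne])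
       (use Yrv in \<open>auto simp: borel_measurable_iff_le\<close>)
  have EX: "{\<omega> \<in> space M. Max ((\<lambda>i. X i \<omega>) ` {..<n1 + n2}) > x}
      = space M - {\<omega> \<in> space M. \<forall>i\<in>{..<n1 + n2}. X i \<omega> \<le> x}"
    using ne by (auto simp: Max_gr_iff not_le) (meson lessThan_iff not_le)
  have EY: "{\<omega> \<in> space N. Max ((\<lambda>i. Y i \<omega>) ` {..<n1 + n2}) > x}
      = space N - {\<omega> \<in> space N. \<forall>i\<in>{..<n1 + n2}. Y i \<omega> \<le> x}"
    using ne by (auto simp: Max_gr_iff not_le) (meson lessThan_iff not_le)
  have JX: "measure M {\<omega> \<in> space M. \<forall>i\<in>{..<n1 + n2}. X i \<omega> \<le> x} = arch_copula psi1 (n1 + n2) vX"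
    using Xjoint[of "\<lambda>_. x"] unfolding vX_def by (simp add: Ball_def)
  have JY: "measure N {\<omega> \<in> space N. \<forall>i\<in>{..<n1 + n2}. Y i \<omega> \<le> x} = arch_copula psi2 (n1 + n2) vY"
    using Yjoint[of "\<lambda>_. x"] unfolding vY_def by (simp add: Ball_def)
  have PX: "measure M {\<omega> \<in> space M. Max ((\<lambda>i. X i \<omega>) ` {..<n1 + n2}) > x}
      = 1 - arch_copula psi1 (n1 + n2) vX"
    unfolding EX using prob_space.prob_compl[OF M SX] JX by simp
  have PY: "measure N {\<omega> \<in> space N. Max ((\<lambda>i. Y i \<omega>) ` {..<n1 + n2}) > x}
      = 1 - arch_copula psi2 (n1 + n2) vY"
    unfolding EY using prob_space.prob_compl[OF N SY] JY by simp
  show "measure N {\<omega> \<in> space N. Max ((\<lambda>i. Y i \<omega>) ` {..<n1 + n2}) > x}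
      \<le> measure M {\<omega> \<in> space M. Max ((\<lambda>i. X i \<omega>) ` {..<n1 + n2}) > x}"
    unfolding PX PY using main by simp
qed

end
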